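(* Let $G=(V,E)$ with weight $\mu$ be an infinite, connected, locally finite weighted graph satisfying condition $(p_0)$, let $m>1$, and fix $o\in V$. Let $(p,q)\in G_4=\{(p,q): p<0,\ q=m-1\}$. Suppose there exist constants $\alpha>0$, $C>0$ and $n_1$ such that $$W_o(n)\le C\, n^{\alpha}\quad\text{for all } n\ge n_1.$$ Then the inequality $\Delta_m u+u^p|\nabla u|^q\le 0$ on $V$ admits no nontrivial positive solution.
   Context: Setting: $G=(V,E)$ is an infinite, connected, locally finite graph with no loops and no multiple edges; $x\sim y$ means $x$ and $y$ are joined by an edge. A weight is a symmetric function $\mu:V\times V\to[0,\infty)$ with $\mu_{xy}=\mu_{yx}>0$ if and only if $x\sim y$; the vertex measure is $\mu(x)=\sum_{y\sim x}\mu_{xy}$. For $m>1$ and $u:V\to\mathbb R$, $\Delta_m u(x)=\frac{1}{\mu(x)}\sum_{y\sim x}\mu_{xy}|u(y)-u(x)|^{m-2}(u(y)-u(x))$ and $|\nabla u(x)|=\big(\sum_{y\sim x}\frac{\mu_{xy}}{2\mu(x)}(u(y)-u(x))^2\big)^{1/2}$. Condition $(p_0)$: there is a constant $p_0>1$ such that $\mu_{xy}/\mu(x)\ge 1/p_0$ for all $x\sim y$. $d(x,y)$ is the graph (shortest path) distance, $B(o,n)=\{x\in V: d(o,x)\le n\}$, and $W_o(n)=\sum_{x\in B(o,n),\,y\in V,\,d(o,x)<d(o,y)}\mu_{xy}$. A nontrivial positive solution of $\Delta_m u+u^p|\nabla u|^q\le 0$ is a non-constant function $u:V\to(0,\infty)$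 such that $\Delta_m u(x)+u(x)^p|\nabla u(x)|^q\le 0$ for every $x\in V$, with the conventions $0^0=1$, $0^q=0$ for $q>0$, and, for $q<0$, $|\nabla u(x)|^q=+\infty$ when $|\nabla u(x)|=0$ (so the inequality fails at such $x$). *)

theory Defs
  imports Complex_Main
begin

text \<open>A weighted graph on vertex type 'v (the vertex set V is UNIV).
  adj is the edge relation, mu the weight.\<close>

definition weighted_graph :: "('v \<Rightarrow> 'v \<Rightarrow> bool) \<Rightarrow> ('v \<Rightarrow> 'v \<Rightarrow> real) \<Rightarrow> bool" where
  "weighted_graph adj mu \<longleftrightarrow>
     infinite (UNIV :: 'v set)
   \<and> (\<forall>x. \<not> adj x x)
   \<and> (\<forall>x y. adj x y \<longleftrightarrow> adj y x)
   \<and> (\<forall>x. finite {y. adj x y})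
   \<and> (\<forall>x y. \<exists>n. (adj ^^ n) x y)
   \<and> (\<forall>x y. mu x y = mu y x)
   \<and> (\<forall>x y. mu x y \<ge> 0)
   \<and> (\<forall>x y. mu x y > 0 \<longleftrightarrow> adj x y)"

definition vmeasure :: "('v \<Rightarrow> 'v \<Rightarrow> bool) \<Rightarrow> ('v \<Rightarrow> 'v \<Rightarrow> real) \<Rightarrow> 'v \<Rightarrow> real" where
  "vmeasure adj mu x = (\<Sum>y\<in>{y. adj x y}. mu x y)"

definition cond_p0 :: "('v \<Rightarrow> 'v \<Rightarrow> bool) \<Rightarrow> ('v \<Rightarrow> 'v \<Rightarrow> real) \<Rightarrow> real \<Rightarrow> bool" where
  "cond_p0 adj mu p0 \<longleftrightarrow> p0 > 1 \<and> (\<forall>x y. adj x y \<longrightarrow> mu x y / vmeasure adj mu x \<ge> 1 / p0)"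

definition gdist :: "('v \<Rightarrow> 'v \<Rightarrow> bool) \<Rightarrow> 'v \<Rightarrow> 'v \<Rightarrow> nat" where
  "gdist adj x y = (LEAST n. (adj ^^ n) x y)"

definition ball_g :: "('v \<Rightarrow> 'v \<Rightarrow> bool) \<Rightarrow> 'v \<Rightarrow> nat \<Rightarrow> 'v set" where
  "ball_g adj o' n = {x. gdist adj o' x \<le> n}"

text \<open>W_o(n); only neighbours y contribute since mu x y = 0 otherwise.\<close>
definition W_o :: "('v \<Rightarrow> 'v \<Rightarrow> bool) \<Rightarrow> ('v \<Rightarrow> 'v \<Rightarrow> real) \<Rightarrow> 'v \<Rightarrow> nat \<Rightarrow> real" where
  "W_o adj mu o' n = (\<Sum>x\<in>ball_g adj o' n.
       \<Sum>y\<in>{y. adj x y \<and> gdist adj o' x < gdist adj o' y}. mu x y)"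

definition m_laplacian :: "('v \<Rightarrow> 'v \<Rightarrow> bool) \<Rightarrow> ('v \<Rightarrow> 'v \<Rightarrow> real) \<Rightarrow> real \<Rightarrow> ('v \<Rightarrow> real) \<Rightarrow> 'v \<Rightarrow> real" where
  "m_laplacian adj mu m u x = (1 / vmeasure adj mu x) *
     (\<Sum>y\<in>{y. adj x y}. mu x y * \<bar>u y - u x\<bar> powr (m - 2) * (u y - u x))"

definition grad_norm :: "('v \<Rightarrow> 'v \<Rightarrow> bool) \<Rightarrow> ('v \<Rightarrow> 'v \<Rightarrow> real) \<Rightarrow> ('v \<Rightarrow> real) \<Rightarrow> 'v \<Rightarrow> real" where
  "grad_norm adj mu u x = sqrt (\<Sum>y\<in>{y. adj x y}. mu x y / (2 * vmeasure adj mu x) * (u y - u x)\<^sup>2)"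

text \<open>Nontrivial positive solution of Delta_m u + u^p |grad u|^q <= 0, with conventions
  0^0 = 1, 0^q = 0 for q > 0, and failure where the gradient vanishes if q < 0.\<close>
definition nontrivial_pos_solution ::
  "('v \<Rightarrow> 'v \<Rightarrow> bool) \<Rightarrow> ('v \<Rightarrow> 'v \<Rightarrow> real) \<Rightarrow> real \<Rightarrow> real \<Rightarrow> real \<Rightarrow> ('v \<Rightarrow> real) \<Rightarrow> bool" where
  "nontrivial_pos_solution adj mu m p q u \<longleftrightarrow>
     (\<forall>x. u x > 0) \<and> (\<exists>x y. u x \<noteq> u y) \<and>
     (\<forall>x. let g = grad_norm adj mu u x in
        \<not> (q < 0 \<and> g = 0) \<and>
        m_laplacian adj mu m u x + u x powr p * (if g = 0 then (if q = 0 then 1 else 0) else g powr q) \<le> 0)"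

end

theory Submission imports Defs "HOL-Real_Asymp.Real_Asymp" begin

lemma wg_facts:
  assumes "weighted_graph adj mu"
  shows "\<And>x y. adj x y \<longleftrightarrow> adj y x" "\<And>x. finite {y. adj x y}"
    "\<And>x y. \<exists>n. (adj ^^ n) x y" "\<And>x y. mu x y = mu y x" "\<And>x y. mu x y \<ge> 0"
    "\<And>x y. mu x y > 0 \<longleftrightarrow> adj x y"
  using assms unfolding weighted_graph_def by auto

lemma gdist_path:
  assumes "weighted_graph adj mu"
  shows "(adj ^^ gdist adj x y) x y"
  unfolding gdist_def using wg_facts(3)[OF assms] by (meson LeastI_ex)

lemma gdist_le:
  "(adj ^^ n) x y \<Longrightarrow> gdist adj x y \<le> n"
  unfolding gdist_def by (rule Least_le)

lemma gdist_step:
  assumes "weighted_graph adj mu" "adj y z"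
  shows "gdist adj x z \<le> Suc (gdist adj x y)"
proof -
  have "(adj ^^ Suc (gdist adj x y)) x z"
    using gdist_path[OF assms(1), of x y] assms(2) by auto
  then show ?thesis by (rule gdist_le)
qed

lemma ball_finite:
  assumes "weighted_graph adj mu"
  shows "finite (ball_g adj o' n)"
proof (induction n)
  case 0
  have "ball_g adj o' 0 \<subseteq> {o'}"
  proof
    fix x assume "x \<in> ball_g adj o' 0"
    then have "gdist adj o' x = 0" unfolding ball_g_def by auto
    then have "(adj ^^ 0) o' x" using gdist_path[OF assms, of o' x] by simp
    then show "x \<in> {o'}" by simp
  qed
  then show ?case using finite_subset by blast
next
  case (Suc n)
  have "ball_g adj o' (Suc n) \<subseteq> ball_g adj o' n \<union> (\<Union>z\<in>ball_g adj o' n. {y. adj z y})"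
  proof
    fix x assume xb: "x \<in> ball_g adj o' (Suc n)"
    show "x \<in> ball_g adj o' n \<union> (\<Union>z\<in>ball_g adj o' n. {y. adj z y})"
    proof (cases "gdist adj o' x \<le> n")
      case True then show ?thesis unfolding ball_g_def by auto
    next
      case False
      then have e: "gdist adj o' x = Suc n" using xb unfolding ball_g_def by auto
      have "(adj ^^ Suc n) o' x" using gdist_path[OF assms, of o' x] e by simp
      then obtain z where z: "(adj ^^ n) o' z" "adj z x" by auto
      have "z \<in> ball_g adj o' n" using gdist_le[OF z(1)] unfolding ball_g_def by auto
      then show ?thesis using z(2) by auto
    qed
  qed
  moreover have "finite (ball_g adj o' n \<union> (\<Union>z\<in>ball_g adj o' n. {y. adj z y}))"
    using Suc wg_facts(2)[OF assms] by auto
  ultimately show ?case using finite_subset by blast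
qed

lemma phi_bounds:
  fixes t m :: real
  assumes "m > 1"
  shows "\<bar>t\<bar> powr (m - 2) * t \<ge> - (\<bar>t\<bar> powr (m - 1))"
    and "\<bar>t\<bar> powr (m - 2) * t \<le> \<bar>t\<bar> powr (m - 1)"
    and "t \<le> 0 \<Longrightarrow> \<bar>t\<bar> powr (m - 2) * t = - (\<bar>t\<bar> powr (m - 1))"
    and "t \<ge> 0 \<Longrightarrow> \<bar>t\<bar> powr (m - 2) * t = \<bar>t\<bar> powr (m - 1)"
proof -
  have key: "\<bar>t\<bar> powr (m - 1) = \<bar>t\<bar> powr (m - 2) * \<bar>t\<bar>"
  proof (cases "t = 0")
    case True then show ?thesis using assms by simp
  next
    case False
    have "\<bar>t\<bar> powr (m - 1) = \<bar>t\<bar> powr ((m - 2) + 1)" by simp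
    also have "\<dots> = \<bar>t\<bar> powr (m - 2) * \<bar>t\<bar> powr 1" by (rule powr_add)
    also have "\<dots> = \<bar>t\<bar> powr (m - 2) * \<bar>t\<bar>" using False by simp
    finally show ?thesis .
  qed
  have nn: "\<bar>t\<bar> powr (m - 2) \<ge> 0" by simp
  show "\<bar>t\<bar> powr (m - 2) * t \<ge> - (\<bar>t\<bar> powr (m - 1))" unfolding key
    using nn by (smt (verit, best) abs_ge_minus_self mult_left_mono mult_minus_right)
  show "\<bar>t\<bar> powr (m - 2) * t \<le> \<bar>t\<bar> powr (m - 1)" unfolding key
    using nn by (simp add: mult_left_mono)
  show "t \<le> 0 \<Longrightarrow> \<bar>t\<bar> powr (m - 2) * t = - (\<bar>t\<bar> powr (m - 1))" unfolding key
    by simp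
  show "t \<ge> 0 \<Longrightarrow> \<bar>t\<bar> powr (m - 2) * t = \<bar>t\<bar> powr (m - 1)" unfolding key
    by simp
qed

lemma phi_mono:
  fixes t s m :: real
  assumes "m > 1" "t \<le> s"
  shows "\<bar>t\<bar> powr (m - 2) * t \<le> \<bar>s\<bar> powr (m - 2) * s"
proof (cases "t \<ge> 0")
  case True
  then have "\<bar>t\<bar> powr (m - 1) \<le> \<bar>s\<bar> powr (m - 1)" using assms by (intro powr_mono2) auto
  then show ?thesis using phi_bounds(4)[OF assms(1), of t] phi_bounds(4)[OF assms(1), of s] True assms by auto
next
  case False
  show ?thesis
  proof (cases "s \<ge> 0")
    case True
    then show ?thesis using phi_bounds(4)[OF assms(1), of s] phi_bounds(3)[OF assms(1), of t] False
      by (smt (verit) powr_ge_zero)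
  next
    case F2: False
    then have "\<bar>s\<bar> powr (m - 1) \<le> \<bar>t\<bar> powr (m - 1)" using assms False by (intro powr_mono2) auto
    then show ?thesis using phi_bounds(3)[OF assms(1), of t] phi_bounds(3)[OF assms(1), of s] False F2 by auto
  qed
qed

lemma core:
  fixes v :: "'v \<Rightarrow> real"
  assumes wg: "weighted_graph adj mu" and m: "m > 1" and c: "0 < c" "c < 1" and M: "M \<ge> 0"
    and vb: "\<forall>x y. \<bar>v x - v y\<bar> \<le> M"
    and ineq: "\<forall>x. (\<Sum>y\<in>{y. adj x y}. mu x y * \<bar>v y - v x\<bar> powr (m - 2) * (v y - v x))
                 \<le> - c * (\<Sum>y\<in>{y. adj x y}. mu x y * \<bar>v y - v x\<bar> powr (m - 1))"
    and W: "\<forall>n\<ge>n1. W_o adj mu o' n \<le> C * real n powr \<alpha>"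
    and nc: "v a \<noteq> v b"
  shows False
proof -
  note wf = wg_facts[OF wg]
  define F where "F x = (\<Sum>y\<in>{y. adj x y}. mu x y * \<bar>v y - v x\<bar> powr (m - 1))" for x
  define h where "h x y = mu x y * \<bar>v y - v x\<bar> powr (m - 2) * (v y - v x)" for x y
  define B where "B n = ball_g adj o' n" for n
  define A where "A n = (\<Sum>x\<in>B n. F x)" for n
  define bd where "bd n = (\<Sum>x\<in>B n. \<Sum>y\<in>{y. adj x y} - B n. mu x y * \<bar>v y - v x\<bar> powr (m - 1))" for n
  have finB: "finite (B n)" for n unfolding B_def by (rule ball_finite[OF wg])
  have mu0: "\<not> adj x y \<Longrightarrow> mu x y = 0" for x y using wf(5,6)[of x y] by linarith
  have Fnn: "F x \<ge> 0" for x unfolding F_def using wf(5) by (intro sum_nonneg) auto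
  have Ann: "A n \<ge> 0" for n unfolding A_def using Fnn by (intro sum_nonneg) auto
  have "\<exists>x0. F x0 > 0"
  proof (rule ccontr)
    assume "\<not> ?thesis"
    have F0: "F x = 0" for x
    proof -
      have "\<not> F x > 0" using \<open>\<not> (\<exists>x0. F x0 > 0)\<close> by blast
      then show ?thesis using Fnn[of x] by linarith
    qed
    have loc: "adj x y \<Longrightarrow> v y = v x" for x y
    proof -
      assume xy: "adj x y"
      have "\<forall>y\<in>{y. adj x y}. mu x y * \<bar>v y - v x\<bar> powr (m - 1) = 0"
        using F0[of x] unfolding F_def
        by (subst sum_nonneg_eq_0_iff[symmetric]) (use wf(2,5) in auto)
      then have "mu x y * \<bar>v y - v x\<bar> powr (m - 1) = 0" using xy by auto
      moreover have "mu x y > 0" using xy wf(6) by auto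
      ultimately have "\<bar>v y - v x\<bar> powr (m - 1) = 0" by simp
      then show "v y = v x" by simp
    qed
    have "(adj ^^ n) a y \<Longrightarrow> v y = v a" for n y
    proof (induction n arbitrary: y)
      case 0 then show ?case by simp
    next
      case (Suc n)
      then obtain z where "(adj ^^ n) a z" "adj z y" by auto
      then show ?case using Suc.IH loc by metis
    qed
    then show False using nc wf(3)[of a b] by metis
  qed
  then obtain x0 where x0: "F x0 > 0" by blast
  define n0 where "n0 = gdist adj o' x0"
  have "x0 \<in> B n0" unfolding B_def ball_g_def n0_def by simp
  then have An0: "A n0 > 0" unfolding A_def
    using member_le_sum[of x0 "B n0" F] Fnn finB x0 by fastforce
  have cA: "c * A n \<le> bd n" for n
  proof -
    have anti: "(\<Sum>x\<in>B n. \<Sum>y\<in>B n. h x y) = 0"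
    proof -
      have hs: "h y x = - h x y" for x y
      proof -
        have e1: "mu y x = mu x y" by (rule wf(4))
        have e2: "\<bar>v x - v y\<bar> = \<bar>v y - v x\<bar>" by (rule abs_minus_commute)
        have e3: "v x - v y = - (v y - v x)" by simp
        show ?thesis unfolding h_def e1 e2 by (simp only: e3 mult_minus_right)
      qed
      have "(\<Sum>x\<in>B n. \<Sum>y\<in>B n. h x y) = (\<Sum>y\<in>B n. \<Sum>x\<in>B n. h x y)" by (rule sum.swap)
      also have "\<dots> = (\<Sum>y\<in>B n. \<Sum>x\<in>B n. - h y x)"
      proof (intro sum.cong refl)
        fix x y show "h x y = - h y x" using hs[of x y] by linarith
      qed
      also have "\<dots> = - (\<Sum>y\<in>B n. \<Sum>x\<in>B n. h y x)" by (simp add: sum_negf)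
      finally show ?thesis by simp
    qed
    have split: "(\<Sum>y\<in>{y. adj x y}. h x y) = (\<Sum>y\<in>B n. h x y) + (\<Sum>y\<in>{y. adj x y} - B n. h x y)" for x
    proof -
      have "(\<Sum>y\<in>{y. adj x y}. h x y) = (\<Sum>y\<in>{y. adj x y} \<inter> B n. h x y) + (\<Sum>y\<in>{y. adj x y} - B n. h x y)"
        using wf(2) by (rule sum.Int_Diff)
      moreover have "(\<Sum>y\<in>{y. adj x y} \<inter> B n. h x y) = (\<Sum>y\<in>B n. h x y)"
        by (rule sum.mono_neutral_left) (use finB mu0 in \<open>auto simp: h_def\<close>)
      ultimately show ?thesis by simp
    qed
    have "(\<Sum>x\<in>B n. \<Sum>y\<in>{y. adj x y}. h x y) = (\<Sum>x\<in>B n. \<Sum>y\<in>{y. adj x y} - B n. h x y)"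
      using anti by (simp add: split sum.distrib)
    also have "\<dots> \<ge> (\<Sum>x\<in>B n. \<Sum>y\<in>{y. adj x y} - B n. - (mu x y * \<bar>v y - v x\<bar> powr (m - 1)))"
      unfolding h_def
    proof (intro sum_mono)
      fix x y
      have "mu x y * (- (\<bar>v y - v x\<bar> powr (m - 1))) \<le> mu x y * (\<bar>v y - v x\<bar> powr (m - 2) * (v y - v x))"
        by (rule mult_left_mono[OF phi_bounds(1)[OF m] wf(5)])
      then show "- (mu x y * \<bar>v y - v x\<bar> powr (m - 1)) \<le> mu x y * \<bar>v y - v x\<bar> powr (m - 2) * (v y - v x)"
        by (simp add: mult.assoc)
    qed
    finally have lo: "- bd n \<le> (\<Sum>x\<in>B n. \<Sum>y\<in>{y. adj x y}. h x y)"
      unfolding bd_def by (simp add: sum_negf)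
    have "(\<Sum>x\<in>B n. \<Sum>y\<in>{y. adj x y}. h x y) \<le> (\<Sum>x\<in>B n. - c * F x)"
      using ineq unfolding h_def F_def by (intro sum_mono) auto
    also have "\<dots> = - c * A n" unfolding A_def by (simp add: sum_distrib_left)
    finally show ?thesis using lo by simp
  qed
  have bdW: "bd n \<le> M powr (m - 1) * W_o adj mu o' n" for n
  proof -
    define T where "T x = {y. adj x y \<and> gdist adj o' x < gdist adj o' y}" for x
    have "bd n \<le> (\<Sum>x\<in>B n. \<Sum>y\<in>{y. adj x y} - B n. mu x y * M powr (m - 1))"
      unfolding bd_def
    proof (intro sum_mono)
      fix x y
      have "\<bar>v y - v x\<bar> powr (m - 1) \<le> M powr (m - 1)"
        using vb m by (intro powr_mono2) auto
      then show "mu x y * \<bar>v y - v x\<bar> powr (m - 1) \<le> mu x y * M powr (m - 1)"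
        using wf(5) by (intro mult_left_mono) auto
    qed
    also have "\<dots> \<le> (\<Sum>x\<in>B n. \<Sum>y\<in>T x. mu x y * M powr (m - 1))"
    proof (intro sum_mono sum_mono2)
      fix x assume xB: "x \<in> B n"
      show "finite (T x)" unfolding T_def using wf(2)[of x] by (rule rev_finite_subset) auto
      show "{y. adj x y} - B n \<subseteq> T x" using xB unfolding T_def B_def ball_g_def by auto
      show "\<And>y. y \<in> T x - ({y. adj x y} - B n) \<Longrightarrow> 0 \<le> mu x y * M powr (m - 1)"
        using wf(5) by simp
    qed
    also have "\<dots> = M powr (m - 1) * W_o adj mu o' n"
      unfolding W_o_def T_def B_def by (simp add: sum_distrib_left sum_distrib_right mult.commute)
    finally show ?thesis .
  qed
  have bdS: "bd (Suc n) \<le> A (Suc n) - A n" for n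
  proof -
    have sub: "B n \<subseteq> B (Suc n)" unfolding B_def ball_g_def by auto
    have "bd (Suc n) \<le> (\<Sum>x\<in>B (Suc n). if x \<in> B n then 0 else F x)"
      unfolding bd_def
    proof (intro sum_mono)
      fix x assume xB: "x \<in> B (Suc n)"
      show "(\<Sum>y\<in>{y. adj x y} - B (Suc n). mu x y * \<bar>v y - v x\<bar> powr (m - 1)) \<le> (if x \<in> B n then 0 else F x)"
      proof (cases "x \<in> B n")
        case True
        have "{y. adj x y} - B (Suc n) = {}"
          using True gdist_step[OF wg, of x _ o'] unfolding B_def ball_g_def by fastforce
        then have "(\<Sum>y\<in>{y. adj x y} - B (Suc n). mu x y * \<bar>v y - v x\<bar> powr (m - 1)) = 0"
          by (simp only: sum.empty)
        then show ?thesis using True by simp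
      next
        case False
        have "(\<Sum>y\<in>{y. adj x y} - B (Suc n). mu x y * \<bar>v y - v x\<bar> powr (m - 1)) \<le> F x"
          unfolding F_def by (rule sum_mono2) (use wf(2,5) in auto)
        then show ?thesis using False by simp
      qed
    qed
    also have "\<dots> = (\<Sum>x\<in>B (Suc n) - B n. F x)"
      by (rule sum.mono_neutral_cong_right) (use finB in auto)
    also have "\<dots> = A (Suc n) - A n" unfolding A_def
      using sum.subset_diff[OF sub finB[of "Suc n"], of F] by simp
    finally show ?thesis .
  qed
  define r where "r = 1 / (1 - c)"
  have r1: "r > 1" unfolding r_def using c by simp
  have rec: "A (Suc n) \<ge> r * A n" for n
  proof -
    have "c * A (Suc n) \<le> A (Suc n) - A n" using cA[of "Suc n"] bdS[of n] by simp
    then have "A n \<le> (1 - c) * A (Suc n)" by (simp add: algebra_simps)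
    then show ?thesis unfolding r_def using c by (simp add: field_simps)
  qed
  have grow: "A (n0 + k) \<ge> r ^ k * A n0" for k
  proof (induction k)
    case 0 then show ?case by simp
  next
    case (Suc k)
    have "r ^ Suc k * A n0 = r * (r ^ k * A n0)" by simp
    also have "\<dots> \<le> r * A (n0 + k)" using Suc r1 by (intro mult_left_mono) auto
    also have "\<dots> \<le> A (n0 + Suc k)" using rec[of "n0 + k"] by simp
    finally show ?case .
  qed
  define D where "D = M powr (m - 1) * C / (c * A n0)"
  have lim: "filterlim (\<lambda>k::nat. r ^ k / (real k + real n0) powr \<alpha>) at_top at_top"
    using r1 by real_asymp
  then have "eventually (\<lambda>k. r ^ k / (real k + real n0) powr \<alpha> \<ge> D + 1) at_top"
    by (simp add: filterlim_at_top)
  moreover have "eventually (\<lambda>k::nat. k \<ge> n1 + 1) at_top" by (rule eventually_ge_at_top)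
  ultimately have "eventually (\<lambda>k. r ^ k / (real k + real n0) powr \<alpha> \<ge> D + 1 \<and> k \<ge> n1 + 1) at_top"
    by (rule eventually_conj)
  then obtain N where "\<forall>k\<ge>N. r ^ k / (real k + real n0) powr \<alpha> \<ge> D + 1 \<and> k \<ge> n1 + 1"
    unfolding eventually_at_top_linorder by blast
  then obtain k where k: "r ^ k / (real k + real n0) powr \<alpha> \<ge> D + 1" "k \<ge> n1 + 1" by blast
  have "n0 + k \<ge> n1" using k(2) by simp
  then have Wk: "W_o adj mu o' (n0 + k) \<le> C * real (n0 + k) powr \<alpha>" using W by blast
  have pos: "(real k + real n0) powr \<alpha> > 0" using k(2) by simp
  have "c * (r ^ k * A n0) \<le> c * A (n0 + k)" using grow[of k] c by (intro mult_left_mono) auto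
  also have "\<dots> \<le> bd (n0 + k)" by (rule cA)
  also have "\<dots> \<le> M powr (m - 1) * W_o adj mu o' (n0 + k)" by (rule bdW)
  also have "\<dots> \<le> M powr (m - 1) * (C * real (n0 + k) powr \<alpha>)"
    by (rule mult_left_mono[OF Wk]) simp
  finally have "r ^ k * (c * A n0) \<le> M powr (m - 1) * (C * real (n0 + k) powr \<alpha>)"
    by (simp add: mult_ac)
  moreover have cA0: "c * A n0 > 0" using c An0 by simp
  ultimately have "r ^ k \<le> M powr (m - 1) * (C * real (n0 + k) powr \<alpha>) / (c * A n0)"
    by (simp add: pos_le_divide_eq)
  also have "\<dots> = D * (real k + real n0) powr \<alpha>" unfolding D_def by (simp add: add.commute)
  finally have "r ^ k \<le> D * (real k + real n0) powr \<alpha>" .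
  then have "r ^ k / (real k + real n0) powr \<alpha> \<le> D" using pos by (simp add: divide_le_eq)
  then show False using k(1) by simp
qed

theorem theorem1p1:
  fixes adj :: "'v \<Rightarrow> 'v \<Rightarrow> bool" and mu :: "'v \<Rightarrow> 'v \<Rightarrow> real"
    and m p q p0 \<alpha> C :: real and n1 :: nat and o' :: 'v
  assumes "weighted_graph adj mu"
    and "cond_p0 adj mu p0"
    and "m > 1"
    and "p < 0" and "q = m - 1"
    and "\<alpha> > 0" and "C > 0"
    and "\<forall>n\<ge>n1. W_o adj mu o' n \<le> C * real n powr \<alpha>"
  shows "\<not> (\<exists>u. nontrivial_pos_solution adj mu m p q u)"
proof
  assume "\<exists>u. nontrivial_pos_solution adj mu m p q u"
  then obtain u where sol: "nontrivial_pos_solution adj mu m p q u" by blast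
  note wf = wg_facts[OF assms(1)]
  have m: "m > 1" by (rule assms(3))
  have upos: "\<And>x. u x > 0" using sol unfolding nontrivial_pos_solution_def by auto
  obtain a b where ab: "u a \<noteq> u b" using sol unfolding nontrivial_pos_solution_def by auto
  have ineq0: "m_laplacian adj mu m u x + u x powr p *
      (if grad_norm adj mu u x = 0 then (if q = 0 then 1 else 0) else grad_norm adj mu u x powr q) \<le> 0" for x
    using sol unfolding nontrivial_pos_solution_def Let_def by blast
  have ineq: "m_laplacian adj mu m u x + u x powr p * grad_norm adj mu u x powr (m - 1) \<le> 0" for x
    using ineq0[of x] assms(3,5) by (cases "grad_norm adj mu u x = 0") auto
  have p0: "p0 > 1" and p0b: "\<And>x y. adj x y \<Longrightarrow> mu x y / vmeasure adj mu x \<ge> 1 / p0"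
    using assms(2) unfolding cond_p0_def by auto
  define M where "M = max (u a) (u b)"
  have Mpos: "M > 0" unfolding M_def using upos[of a] by simp
  define v where "v x = min (u x) M" for x
  define s where "s = sqrt (1 / (2 * p0))"
  have spos: "s > 0" unfolding s_def using p0 by simp
  define c where "c = min (1/2) (M powr p * s powr (m - 1))"
  have cpos: "c > 0" unfolding c_def using Mpos spos by simp
  have c1: "c < 1" unfolding c_def by simp
  have cle: "c \<le> M powr p * s powr (m - 1)" unfolding c_def by simp
  have vmnn: "vmeasure adj mu x \<ge> 0" for x unfolding vmeasure_def using wf(5) by (intro sum_nonneg) auto
  have gradlb: "s * \<bar>u y - u x\<bar> \<le> grad_norm adj mu u x" if xy: "adj x y" for x y
  proof -
    define S where "S = (\<Sum>y\<in>{y. adj x y}. mu x y / (2 * vmeasure adj mu x) * (u y - u x)\<^sup>2)"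
    have "mu x y / (2 * vmeasure adj mu x) * (u y - u x)\<^sup>2 \<le> S"
      unfolding S_def
      by (rule member_le_sum) (use xy wf(2,5) vmnn in auto)
    moreover have "1 / (2 * p0) * (u y - u x)\<^sup>2 \<le> mu x y / (2 * vmeasure adj mu x) * (u y - u x)\<^sup>2"
    proof (rule mult_right_mono)
      have "1 / p0 / 2 \<le> mu x y / vmeasure adj mu x / 2" using p0b[OF xy] by simp
      then show "1 / (2 * p0) \<le> mu x y / (2 * vmeasure adj mu x)" by simp
    qed simp
    ultimately have "1 / (2 * p0) * (u y - u x)\<^sup>2 \<le> S" by linarith
    then have "sqrt (1 / (2 * p0) * (u y - u x)\<^sup>2) \<le> sqrt S" by (rule real_sqrt_le_mono)
    moreover have "sqrt (1 / (2 * p0) * (u y - u x)\<^sup>2) = s * \<bar>u y - u x\<bar>"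
      unfolding s_def real_sqrt_mult real_sqrt_abs by (rule refl)
    moreover have "grad_norm adj mu u x = sqrt S" unfolding grad_norm_def S_def by simp
    ultimately show ?thesis by metis
  qed
  have key: "(\<Sum>y\<in>{y. adj x y}. mu x y * \<bar>v y - v x\<bar> powr (m - 2) * (v y - v x))
          \<le> - c * (\<Sum>y\<in>{y. adj x y}. mu x y * \<bar>v y - v x\<bar> powr (m - 1))" for x
  proof -
    define Fv where "Fv = (\<Sum>y\<in>{y. adj x y}. mu x y * \<bar>v y - v x\<bar> powr (m - 1))"
    have Fvnn: "Fv \<ge> 0" unfolding Fv_def using wf(5) by (intro sum_nonneg) auto
    show ?thesis
    proof (cases "u x \<le> M")
      case False
      then have vx: "v x = M" unfolding v_def by simp
      have "(\<Sum>y\<in>{y. adj x y}. mu x y * \<bar>v y - v x\<bar> powr (m - 2) * (v y - v x)) = - Fv"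
        unfolding Fv_def sum_negf[symmetric]
      proof (rule sum.cong)
        fix y
        have "v y - v x \<le> 0" using vx unfolding v_def by simp
        then show "mu x y * \<bar>v y - v x\<bar> powr (m - 2) * (v y - v x) = - (mu x y * \<bar>v y - v x\<bar> powr (m - 1))"
          using phi_bounds(3)[OF m, of "v y - v x"] by (simp add: mult.assoc)
      qed simp
      also have "\<dots> \<le> - c * Fv" using Fvnn c1 cpos by (simp add: mult_left_le_one_le)
      finally show ?thesis unfolding Fv_def .
    next
      case True
      then have vx: "v x = u x" unfolding v_def by simp
      show ?thesis
      proof (cases "{y. adj x y} = {}")
        case True then show ?thesis by simp
      next
        case False
        then obtain y0 where y0: "adj x y0" by auto
        have "mu x y0 \<le> vmeasure adj mu x" unfolding vmeasure_def
          by (rule member_le_sum) (use y0 wf(2,5) in auto)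
        then have vmpos: "vmeasure adj mu x > 0" using wf(6)[of x y0] y0 by simp
        define g where "g = grad_norm adj mu u x"
        have gnn: "g \<ge> 0" unfolding g_def grad_norm_def
          by (intro real_sqrt_ge_zero sum_nonneg mult_nonneg_nonneg divide_nonneg_nonneg) (use wf(5) vmnn in auto)
        have "(\<Sum>y\<in>{y. adj x y}. mu x y * \<bar>v y - v x\<bar> powr (m - 2) * (v y - v x))
            \<le> (\<Sum>y\<in>{y. adj x y}. mu x y * \<bar>u y - u x\<bar> powr (m - 2) * (u y - u x))"
        proof (rule sum_mono)
          fix y
          have "v y - v x \<le> u y - u x" using vx unfolding v_def by simp
          then have "\<bar>v y - v x\<bar> powr (m - 2) * (v y - v x) \<le> \<bar>u y - u x\<bar> powr (m - 2) * (u y - u x)"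
            by (rule phi_mono[OF m])
          then show "mu x y * \<bar>v y - v x\<bar> powr (m - 2) * (v y - v x) \<le> mu x y * \<bar>u y - u x\<bar> powr (m - 2) * (u y - u x)"
            using wf(5)[of x y] by (simp add: mult.assoc mult_left_mono)
        qed
        also have "\<dots> = vmeasure adj mu x * m_laplacian adj mu m u x"
          unfolding m_laplacian_def using vmpos by simp
        also have "\<dots> \<le> vmeasure adj mu x * (- (u x powr p * g powr (m - 1)))"
          using ineq[of x] vmpos unfolding g_def by (intro mult_left_mono) auto
        finally have up: "(\<Sum>y\<in>{y. adj x y}. mu x y * \<bar>v y - v x\<bar> powr (m - 2) * (v y - v x))
            \<le> - (vmeasure adj mu x * u x powr p * g powr (m - 1))" by simp
        have "Fv \<le> (\<Sum>y\<in>{y. adj x y}. mu x y * (g / s) powr (m - 1))"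
          unfolding Fv_def
        proof (rule sum_mono)
          fix y assume "y \<in> {y. adj x y}"
          then have xy: "adj x y" by simp
          have "\<bar>v y - v x\<bar> \<le> \<bar>u y - u x\<bar>" using vx True unfolding v_def by auto
          also have "\<dots> \<le> g / s" using gradlb[OF xy] spos unfolding g_def by (simp add: field_simps)
          finally have "\<bar>v y - v x\<bar> powr (m - 1) \<le> (g / s) powr (m - 1)"
            using m by (intro powr_mono2) auto
          then show "mu x y * \<bar>v y - v x\<bar> powr (m - 1) \<le> mu x y * (g / s) powr (m - 1)"
            using wf(5)[of x y] by (intro mult_left_mono) auto
        qed
        also have "\<dots> = vmeasure adj mu x * (g powr (m - 1) / s powr (m - 1))"
          unfolding vmeasure_def using gnn spos by (simp add: sum_distrib_right powr_divide sum_divide_distrib)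
        finally have Fvle: "Fv \<le> vmeasure adj mu x * (g powr (m - 1) / s powr (m - 1))" .
        have "M powr p \<le> u x powr p" using assms(4) upos[of x] True by (intro powr_mono2') auto
        then have "c \<le> u x powr p * s powr (m - 1)" using cle spos
          by (smt (verit) mult_right_mono powr_ge_zero)
        then have cs: "c / s powr (m - 1) \<le> u x powr p" using spos by (simp add: divide_le_eq)
        have "c * Fv \<le> c * (vmeasure adj mu x * (g powr (m - 1) / s powr (m - 1)))"
          using Fvle cpos by (intro mult_left_mono) auto
        also have "\<dots> = vmeasure adj mu x * g powr (m - 1) * (c / s powr (m - 1))" by simp
        also have "\<dots> \<le> vmeasure adj mu x * g powr (m - 1) * u x powr p"
          using cs vmpos by (intro mult_left_mono) auto
        finally have "c * Fv \<le> vmeasure adj mu x * u x powr p * g powr (m - 1)" by (simp add: mult_ac)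
        then show ?thesis using up unfolding Fv_def by simp
      qed
    qed
  qed
  have vb: "\<forall>x y. \<bar>v x - v y\<bar> \<le> M"
  proof (intro allI)
    fix x y
    have "0 < v x" "v x \<le> M" "0 < v y" "v y \<le> M" unfolding v_def using upos[of x] upos[of y] Mpos by auto
    then show "\<bar>v x - v y\<bar> \<le> M" by linarith
  qed
  have vab: "v a \<noteq> v b" unfolding v_def M_def using ab by auto
  show False
    by (rule core[OF assms(1) m cpos c1 less_imp_le[OF Mpos] vb _ assms(8) vab]) (use key in blast)
qed

end
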